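(* Let $X$ be a finite set of finite words and let $(w_i)_{i\in\mathbb{N}}$ be finite words with $\lim_{i\to\infty}|w_i| = \infty$. If every $w_i$ has an $X$-interpretation but no $w_i$ is a synchronizing word of $X$, then one can write $w_i = u_iv_i$ for each $i$ so that some subsequence of the sequence of shifted finite words $(u_i\,|\,v_i)_{i\in\mathbb{N}}$ converges to a bi-infinite word that has two different $X$-factorizations.
   Context: A word $w$ is a synchronizing word of $X$ if $w = w_1w_2$ for some words $w_1,w_2$ such that for every $v\in X^*$ of the form $v = pws$, we have $pw_1\in X^*$ and $w_2s\in X^*$. An $X$-interpretation of a finite word $w$ is a factorization $w = w_1w_2\cdots w_n$ where $w_1$ is a suffix of a word in $X$, $w_n$ is a prefix of a word in $X$, and $w_j\in X$ for $1<j<n$. The shifted word $(u\,|\,v)$ with $u = a_{-m}\cdots a_{-1}$, $v = a_0\cdots a_n$ is the map $\{-m,\dots,n\}\to$ letters, $k\mapsto a_k$. A sequence of shifted finite words $t_i:A_i\to$ letters converges to a bi-infinite word $t:\mathbb{Z}\to$ letters if for every $k\in\mathbb{Z}$ there is $L$ with $k\in A_i$ and $t_i(k)=t(k)$ for all $i\ge L$. An $X$-factorization of a bi-infinite word $t$ is a representation $t = \cdots x_{-2}x_{-1}p\,|\,q\,x_1x_2\cdots$ (with the bar marking position $0$) where all $x_j\in X$, $pq\in X$ and $q\neq\varepsilon$; it is recorded as the sequence $(\dots,x_{-2},x_{-1},p\,|\,q,x_1,x_2,\dots)$, and two factorizations are different if these sequences differ. *)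

theory Defs
  imports Main "HOL-Library.Sublist"
begin

definition star :: "'a list set \<Rightarrow> 'a list set" where
  "star X = {concat xs | xs. set xs \<subseteq> X}"

definition sync_word :: "'a list set \<Rightarrow> 'a list \<Rightarrow> bool" where
  "sync_word X w \<longleftrightarrow> (\<exists>w1 w2. w = w1 @ w2 \<and>
     (\<forall>p s. p @ w @ s \<in> star X \<longrightarrow> p @ w1 \<in> star X \<and> w2 @ s \<in> star X))"

definition has_interp :: "'a list set \<Rightarrow> 'a list \<Rightarrow> bool" where
  "has_interp X w \<longleftrightarrow> (\<exists>ws. ws \<noteq> [] \<and> concat ws = w \<and>
     (\<exists>x\<in>X. suffix (hd ws) x) \<and> (\<exists>x\<in>X. prefix (last ws) x) \<and>
     (\<forall>j. 0 < j \<and> j < length ws - 1 \<longrightarrow> ws ! j \<in> X))"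

definition shifted :: "'a list \<Rightarrow> 'a list \<Rightarrow> int \<Rightarrow> 'a option" where
  "shifted u v k =
     (if - int (length u) \<le> k \<and> k < 0 then Some (u ! nat (int (length u) + k))
      else if 0 \<le> k \<and> k < int (length v) then Some (v ! nat k)
      else None)"

definition converges_to :: "(nat \<Rightarrow> int \<Rightarrow> 'a option) \<Rightarrow> (int \<Rightarrow> 'a) \<Rightarrow> bool" where
  "converges_to s t \<longleftrightarrow> (\<forall>k. \<exists>L. \<forall>i\<ge>L. s i k = Some (t k))"

definition slice :: "(int \<Rightarrow> 'a) \<Rightarrow> int \<Rightarrow> nat \<Rightarrow> 'a list" where
  "slice t a n = map (\<lambda>i. t (a + int i)) [0..<n]"

text \<open>X-factorization t = ... x_{-2} x_{-1} p | q x_1 x_2 ...; the word x 0 is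
not part of the factorization (the middle block is the pair (p,q)).\<close>

definition right_part :: "(int \<Rightarrow> 'a list) \<Rightarrow> 'a list \<Rightarrow> nat \<Rightarrow> 'a list" where
  "right_part x q n = q @ concat (map (\<lambda>j. x (int j)) [1..<Suc n])"

definition left_part :: "(int \<Rightarrow> 'a list) \<Rightarrow> 'a list \<Rightarrow> nat \<Rightarrow> 'a list" where
  "left_part x p n = concat (map (\<lambda>j. x (- int j)) (rev [1..<Suc n])) @ p"

definition is_Xfact :: "'a list set \<Rightarrow> (int \<Rightarrow> 'a) \<Rightarrow> (int \<Rightarrow> 'a list) \<Rightarrow> 'a list \<Rightarrow> 'a list \<Rightarrow> bool" where
  "is_Xfact X t x p q \<longleftrightarrow>
     (\<forall>j. j \<noteq> 0 \<longrightarrow> x j \<in> X) \<and> p @ q \<in> X \<and> q \<noteq> [] \<and>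
     (\<forall>n. slice t 0 (length (right_part x q n)) = right_part x q n) \<and>
     (\<forall>n. slice t (- int (length (left_part x p n))) (length (left_part x p n)) = left_part x p n) \<and>
     (\<forall>m. \<exists>n. m \<le> length (right_part x q n)) \<and>
     (\<forall>m. \<exists>n. m \<le> length (left_part x p n))"

definition two_Xfacts :: "'a list set \<Rightarrow> (int \<Rightarrow> 'a) \<Rightarrow> bool" where
  "two_Xfacts X t \<longleftrightarrow> (\<exists>x p q x' p' q'. is_Xfact X t x p q \<and> is_Xfact X t x' p' q' \<and>
     ((p, q) \<noteq> (p', q') \<or> (\<exists>j. j \<noteq> 0 \<and> x j \<noteq> x' j)))"

end

theory Submission
  imports Defs "HOL-Library.Diagonal_Subsequence" "HOL-Library.Nat_Bijection" "HOL-Library.Infinite_Set"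
begin

lemma compact_seq:
  fixes g :: "nat \<Rightarrow> int \<Rightarrow> 'b"
  assumes fin: "\<And>k. finite (range (\<lambda>i. g i k))"
  shows "\<exists>(\<phi>::nat\<Rightarrow>nat) h. strict_mono \<phi> \<and> (\<forall>k. \<exists>L. \<forall>i\<ge>L. g (\<phi> i) k = h k)"
proof -
  define P where "P = (\<lambda>n (s::nat\<Rightarrow>nat). \<exists>c. \<forall>i. g (s i) (int_decode n) = c)"
  interpret subseqs P
  proof
    fix n and s :: "nat \<Rightarrow> nat"
    assume "strict_mono s"
    have "finite ((\<lambda>i. g (s i) (int_decode n)) ` UNIV)"
      by (rule finite_subset[OF _ fin[of "int_decode n"]]) auto
    from pigeonhole_infinite[OF infinite_UNIV_nat this]
    obtain a where "infinite {i. g (s i) (int_decode n) = g (s a) (int_decode n)}" by auto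
    from infinite_enumerate[OF this] obtain r :: "nat \<Rightarrow> nat" where
      "strict_mono r" "\<forall>m. r m \<in> {i. g (s i) (int_decode n) = g (s a) (int_decode n)}" by blast
    then show "\<exists>r'. strict_mono r' \<and> P n (s \<circ> r')" unfolding P_def by auto
  qed
  have st: "strict_mono diagseq" by (rule subseq_diagseq)
  have "\<exists>c. \<forall>i\<ge>Suc n. g (diagseq i) (int_decode n) = c" for n
  proof -
    have stab: "\<And>r s n. strict_mono r \<Longrightarrow> P n s \<Longrightarrow> P n (s \<circ> r)"
      unfolding P_def by auto
    have "P n (diagseq \<circ> (+) (Suc n))"
      using diagseq_holds[OF stab, of n] by simp
    then obtain c where c: "\<forall>i. g (diagseq (Suc n + i)) (int_decode n) = c" unfolding P_def by auto
    show ?thesis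
    proof (intro exI allI impI)
      fix i assume "Suc n \<le> i"
      then show "g (diagseq i) (int_decode n) = c" using c[rule_format, of "i - Suc n"] by simp
    qed
  qed
  then obtain h0 where h0: "\<forall>n. \<forall>i\<ge>Suc n. g (diagseq i) (int_decode n) = h0 n" by metis
  have "\<forall>k. \<exists>L. \<forall>i\<ge>L. g (diagseq i) k = h0 (int_encode k)"
  proof
    fix k
    show "\<exists>L. \<forall>i\<ge>L. g (diagseq i) k = h0 (int_encode k)"
      using h0[rule_format, of "int_encode k"] by auto
  qed
  then show ?thesis using st by (intro exI[of _ diagseq] exI[of _ "\<lambda>k. h0 (int_encode k)"]) simp
qed


lemma length_slice[simp]: "length (slice t a n) = n"
  by (simp add: slice_def)

lemma nth_slice[simp]: "i < n \<Longrightarrow> slice t a n ! i = t (a + int i)"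
  by (simp add: slice_def)

lemma slice_add: "slice t a (m + n) = slice t a m @ slice t (a + int m) n"
  by (rule nth_equalityI) (auto simp: nth_append add.assoc)

lemma enum_between:
  fixes S :: "nat set"
  assumes "infinite S" "s \<in> S"
  shows "\<not> (enumerate S j < s \<and> s < enumerate S (Suc j))"
proof
  assume h: "enumerate S j < s \<and> s < enumerate S (Suc j)"
  obtain n where n: "enumerate S n = s" using enumerate_Ex[OF assms] by blast
  from h n assms(1) show False by auto
qed

lemma enum_first:
  fixes S :: "nat set"
  assumes "infinite S" "s \<in> S"
  shows "enumerate S 0 \<le> s"
proof -
  obtain n where n: "enumerate S n = s" using enumerate_Ex[OF assms] by blast
  then show ?thesis using assms(1) by auto
qed

lemma build_fact:
  fixes t :: "int \<Rightarrow> 'a" and C :: "int set"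
  assumes G: "\<forall>k. \<exists>c\<in>C. k < c \<and> c \<le> k + int M"
    and P: "\<forall>c c'. c\<in>C \<longrightarrow> c'\<in>C \<longrightarrow> c < c' \<longrightarrow> (\<forall>d\<in>C. \<not>(c<d \<and> d<c')) \<longrightarrow> slice t c (nat(c'-c)) \<in> X"
  shows "\<exists>x p q. is_Xfact X t x p q \<and> (p = [] \<longleftrightarrow> 0 \<in> C)"
proof -
  have P': "slice t c (nat(c'-c)) \<in> X" if "c\<in>C" "c'\<in>C" "c < c'" "\<forall>d\<in>C. \<not>(c<d \<and> d<c')" for c c'
    using P that by blast
  define R where "R = {n::nat. 0 < n \<and> int n \<in> C}"
  define L where "L = {n::nat. - int n \<in> C}"
  have infR: "infinite R"
    unfolding infinite_nat_iff_unbounded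
  proof
    fix m
    obtain c where c: "c \<in> C" "int m < c" "c \<le> int m + int M" using G by blast
    then show "\<exists>n>m. n \<in> R" unfolding R_def by (intro exI[of _ "nat c"]) auto
  qed
  have infL: "infinite L"
    unfolding infinite_nat_iff_unbounded
  proof
    fix m
    obtain c where c: "c \<in> C" "- int m - int M - 1 < c" "c \<le> - int m - int M - 1 + int M" using G by blast
    then show "\<exists>n>m. n \<in> L" unfolding L_def by (intro exI[of _ "nat (-c)"]) auto
  qed
  define r where "r j = int (enumerate R j)" for j
  define l where "l j = - int (enumerate L j)" for j
  have r1: "r j \<in> C \<and> 0 < r j" for j
    using enumerate_in_set[OF infR, of j] unfolding r_def R_def by auto
  have r2: "r j < r (Suc j)" for j
    using enumerate_step[OF infR, of j] unfolding r_def by auto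
  have rge: "int j < r j" for j
  proof (induction j)
    case 0 then show ?case using r1[of 0] by simp
  next
    case (Suc j) then show ?case using r2[of j] by simp
  qed
  have r3: "\<forall>d\<in>C. \<not> (r j < d \<and> d < r (Suc j))" for j
  proof (intro ballI notI)
    fix d assume d: "d \<in> C" "r j < d \<and> d < r (Suc j)"
    then have "0 < d" using r1[of j] by auto
    then have "nat d \<in> R" using d unfolding R_def by auto
    from enum_between[OF infR this, of j] d \<open>0 < d\<close> show False unfolding r_def by linarith
  qed
  have r4: "\<forall>d\<in>C. \<not> (0 < d \<and> d < r 0)"
  proof (intro ballI notI)
    fix d assume d: "d \<in> C" "0 < d \<and> d < r 0"
    then have "nat d \<in> R" unfolding R_def by auto
    from enum_first[OF infR this] d show False unfolding r_def by linarith
  qed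
  have l1: "l j \<in> C \<and> l j \<le> 0" for j
    using enumerate_in_set[OF infL, of j] unfolding l_def L_def by auto
  have l2: "l (Suc j) < l j" for j
    using enumerate_step[OF infL, of j] unfolding l_def by auto
  have lge: "int j \<le> - l j" for j
    using le_enumerate[OF infL, of j] unfolding l_def by auto
  have l3: "\<forall>d\<in>C. \<not> (l (Suc j) < d \<and> d < l j)" for j
  proof (intro ballI notI)
    fix d assume d: "d \<in> C" "l (Suc j) < d \<and> d < l j"
    then have "d \<le> 0" using l1[of j] by auto
    then have "nat (-d) \<in> L" using d unfolding L_def by auto
    from enum_between[OF infL this, of j] d \<open>d \<le> 0\<close> show False unfolding l_def by linarith
  qed
  have l4: "\<forall>d\<in>C. \<not> (l 0 < d \<and> d \<le> 0)"
  proof (intro ballI notI)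
    fix d assume d: "d \<in> C" "l 0 < d \<and> d \<le> 0"
    then have "nat (-d) \<in> L" unfolding L_def by auto
    from enum_first[OF infL this] d show False unfolding l_def by linarith
  qed
  have l5: "l 0 = 0 \<longleftrightarrow> 0 \<in> C"
  proof
    assume "l 0 = 0" then show "0 \<in> C" using l1[of 0] by simp
  next
    assume "0 \<in> C" then have "0 \<in> L" unfolding L_def by simp
    from enum_first[OF infL this] show "l 0 = 0" unfolding l_def by simp
  qed
  define x where "x j = (if 0 < j then slice t (r (nat j - 1)) (nat (r (nat j) - r (nat j - 1)))
      else if j < 0 then slice t (l (nat (-j))) (nat (l (nat (-j) - 1) - l (nat (-j)))) else [])" for j
  define p where "p = slice t (l 0) (nat (- l 0))"
  define q where "q = slice t 0 (nat (r 0))"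
  have xpos: "x (int (Suc j)) = slice t (r j) (nat (r (Suc j) - r j))" for j
  proof -
    have "nat (int (Suc j)) = Suc j" by simp
    then show ?thesis unfolding x_def by (simp del: of_nat_Suc)
  qed
  have xneg: "x (- int (Suc j)) = slice t (l (Suc j)) (nat (l j - l (Suc j)))" for j
  proof -
    have "nat (- (- int (Suc j))) = Suc j" by simp
    then show ?thesis unfolding x_def by (simp del: of_nat_Suc)
  qed
  have xX: "x j \<in> X" if "j \<noteq> 0" for j
  proof (cases "0 < j")
    case True
    define k where "k = nat j - 1"
    have k: "j = int (Suc k)" using True unfolding k_def by simp
    have "x (int (Suc k)) \<in> X" unfolding xpos by (rule P'[OF conjunct1[OF r1[of k]] conjunct1[OF r1[of "Suc k"]] r2[of k] r3[of k]])
    then show ?thesis by (subst k)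
  next
    case False
    define k where "k = nat (- j) - 1"
    have k: "j = - int (Suc k)" using False that unfolding k_def by simp
    have "x (- int (Suc k)) \<in> X" unfolding xneg by (rule P'[OF conjunct1[OF l1[of "Suc k"]] conjunct1[OF l1[of k]] l2[of k] l3[of k]])
    then show ?thesis by (subst k)
  qed
  have pq: "p @ q = slice t (l 0) (nat (r 0 - l 0))"
  proof -
    have "nat (r 0 - l 0) = nat (- l 0) + nat (r 0)" using r1[of 0] l1[of 0] by (subst nat_add_distrib[symmetric]) (auto simp: algebra_simps)
    moreover have "l 0 + int (nat (- l 0)) = 0" using l1[of 0] by simp
    ultimately show ?thesis unfolding p_def q_def using slice_add[of t "l 0" "nat (- l 0)" "nat (r 0)"] by simp
  qed
  have pqX: "p @ q \<in> X"
  proof -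
    have "\<forall>d\<in>C. \<not> (l 0 < d \<and> d < r 0)"
    proof (intro ballI notI)
      fix d assume d: "d \<in> C" "l 0 < d \<and> d < r 0"
      show False
      proof (cases "d \<le> 0")
        case True then show False using l4 d by blast
      next
        case False then have "0 < d" by simp
        then show False using r4 d by blast
      qed
    qed
    moreover have "l 0 < r 0" using l1[of 0] r1[of 0] by simp
    ultimately show ?thesis unfolding pq using P'[OF conjunct1[OF l1[of 0]] conjunct1[OF r1[of 0]]] by blast
  qed
  have qne: "q \<noteq> []"
  proof -
    have "length q = nat (r 0)" by (simp add: q_def)
    then show ?thesis using r1[of 0] by auto
  qed
  have rp: "right_part x q n = slice t 0 (nat (r n))" for n
  proof (induction n)
    case 0 then show ?case by (simp add: right_part_def q_def)
  next
    case (Suc n)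
    have "right_part x q (Suc n) = right_part x q n @ x (int (Suc n))"
      by (simp add: right_part_def)
    also have "\<dots> = slice t 0 (nat (r n)) @ slice t (r n) (nat (r (Suc n) - r n))"
      using Suc xpos by simp
    also have "\<dots> = slice t 0 (nat (r (Suc n)))"
    proof -
      have "nat (r (Suc n)) = nat (r n) + nat (r (Suc n) - r n)" using r1[of n] r2[of n] by (subst nat_add_distrib[symmetric]) (auto simp: algebra_simps)
      then show ?thesis using slice_add[of t 0 "nat (r n)" "nat (r (Suc n) - r n)"] r1[of n] by simp
    qed
    finally show ?case .
  qed
  have lp: "left_part x p n = slice t (l n) (nat (- l n))" for n
  proof (induction n)
    case 0 then show ?case by (simp add: left_part_def p_def)
  next
    case (Suc n)
    have "left_part x p (Suc n) = x (- int (Suc n)) @ left_part x p n"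
      by (simp add: left_part_def)
    also have "\<dots> = slice t (l (Suc n)) (nat (l n - l (Suc n))) @ slice t (l n) (nat (- l n))"
      using Suc xneg by simp
    also have "\<dots> = slice t (l (Suc n)) (nat (- l (Suc n)))"
    proof -
      have "nat (- l (Suc n)) = nat (l n - l (Suc n)) + nat (- l n)" using l1[of n] l2[of n] by (subst nat_add_distrib[symmetric]) (auto simp: algebra_simps)
      then show ?thesis using slice_add[of t "l (Suc n)" "nat (l n - l (Suc n))" "nat (- l n)"] l2[of n] by simp
    qed
    finally show ?case .
  qed
  have "is_Xfact X t x p q"
    unfolding is_Xfact_def
  proof (intro conjI allI impI)
    show "x j \<in> X" if "j \<noteq> 0" for j by (rule xX[OF that])
    show "p @ q \<in> X" by (rule pqX)
    show "q \<noteq> []" by (rule qne)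
    show "slice t 0 (length (right_part x q n)) = right_part x q n" for n
      unfolding rp by simp
    show "slice t (- int (length (left_part x p n))) (length (left_part x p n)) = left_part x p n" for n
      unfolding lp using l1[of n] by simp
    show "\<exists>n. m \<le> length (right_part x q n)" for m
      unfolding rp using rge[of m] by (intro exI[of _ m]) simp
    show "\<exists>n. m \<le> length (left_part x p n)" for m
      unfolding lp using lge[of m] by (intro exI[of _ m]) simp
  qed
  moreover have "p = [] \<longleftrightarrow> 0 \<in> C"
  proof -
    have "length p = nat (- l 0)" by (simp add: p_def)
    then have "p = [] \<longleftrightarrow> l 0 = 0" using l1[of 0] by auto
    then show ?thesis using l5 by simp
  qed
  ultimately show ?thesis by blast
qed


definition good_cuts :: "'a list set \<Rightarrow> nat \<Rightarrow> (int \<Rightarrow> 'a) \<Rightarrow> int set \<Rightarrow> int \<Rightarrow> int \<Rightarrow> bool" where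
  "good_cuts X M T C lo hi \<longleftrightarrow>
    (\<forall>k. lo \<le> k \<and> k + int M \<le> hi \<longrightarrow> (\<exists>c\<in>C. k < c \<and> c \<le> k + int M)) \<and>
    (\<forall>c c'. c\<in>C \<longrightarrow> c'\<in>C \<longrightarrow> lo \<le> c \<longrightarrow> c < c' \<longrightarrow> c' \<le> hi \<longrightarrow>
        (\<forall>d\<in>C. \<not>(c<d \<and> d<c')) \<longrightarrow> slice T c (nat(c'-c)) \<in> X)"

definition S :: "'a list list \<Rightarrow> nat \<Rightarrow> nat" where
  "S ws j = length (concat (take j ws))"

definition cuts :: "'a list list \<Rightarrow> int \<Rightarrow> int set" where
  "cuts ws off = {off + int (S ws j) | j. j \<le> length ws}"

lemma S_0[simp]: "S ws 0 = 0" by (simp add: S_def)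

lemma S_Suc: "j < length ws \<Longrightarrow> S ws (Suc j) = S ws j + length (ws!j)"
  by (simp add: S_def take_Suc_conv_app_nth)

lemma S_mono: "j \<le> j' \<Longrightarrow> S ws j \<le> S ws j'"
proof -
  assume "j \<le> j'"
  then have "take j' ws = take j ws @ take (j' - j) (drop j ws)"
    using take_add[of j "j' - j" ws] by simp
  then show ?thesis unfolding S_def by simp
qed

lemma S_len: "S ws (length ws) = length (concat ws)"
  by (simp add: S_def)

lemma locate: "k < length (concat ws) \<Longrightarrow> \<exists>j<length ws. S ws j \<le> k \<and> k < S ws (Suc j)"
proof (induction ws arbitrary: k)
  case Nil then show ?case by simp
next
  case (Cons y ys)
  show ?case
  proof (cases "k < length y")
    case True
    then show ?thesis by (intro exI[of _ 0]) (simp add: S_def)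
  next
    case False
    then have "k - length y < length (concat ys)" using Cons.prems by simp
    from Cons.IH[OF this] obtain j where j: "j < length ys" "S ys j \<le> k - length y" "k - length y < S ys (Suc j)"
      by blast
    have "S (y#ys) (Suc j) = length y + S ys j" "S (y#ys) (Suc (Suc j)) = length y + S ys (Suc j)"
      by (simp_all add: S_def)
    then show ?thesis using j False by (intro exI[of _ "Suc j"]) auto
  qed
qed

lemma concat_nth_piece:
  assumes "j < length ws" "i < length (ws!j)"
  shows "concat ws ! (S ws j + i) = (ws!j) ! i"
proof -
  have "concat ws = concat (take j ws) @ ws!j @ concat (drop (Suc j) ws)"
    using assms(1) by (metis concat.simps(2) concat_append id_take_nth_drop)
  then show ?thesis using assms unfolding S_def by (simp add: nth_append)
qed

lemma cuts_consec:
  assumes c: "c \<in> cuts ws off" and c': "c' \<in> cuts ws off" and lt: "c < c'"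
    and nb: "\<forall>d\<in>cuts ws off. \<not>(c<d \<and> d<c')"
  shows "\<exists>j<length ws. c = off + int (S ws j) \<and> c' = off + int (S ws (Suc j))"
proof -
  obtain j1 where j1: "j1 \<le> length ws" "c = off + int (S ws j1)" using c unfolding cuts_def by auto
  obtain j2 where j2: "j2 \<le> length ws" "c' = off + int (S ws j2)" using c' unfolding cuts_def by auto
  have "S ws j2 \<le> S ws (length ws)" using S_mono j2(1) by blast
  then have klt: "S ws j1 < length (concat ws)" using j1 j2 lt S_len[of ws] by simp
  from locate[OF klt] obtain j where j: "j < length ws" "S ws j \<le> S ws j1" "S ws j1 < S ws (Suc j)" by blast
  have eq1: "S ws j = S ws j1"
  proof (cases "j1 \<le> j")
    case True then show ?thesis using S_mono[OF True, of ws] j by simp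
  next
    case False then have "Suc j \<le> j1" by simp
    from S_mono[OF this, of ws] j show ?thesis by simp
  qed
  have inC: "off + int (S ws (Suc j)) \<in> cuts ws off" unfolding cuts_def using j(1)
    by (auto intro!: exI[of _ "Suc j"])
  have gt: "c < off + int (S ws (Suc j))" using j j1 by simp
  have ge: "c' \<le> off + int (S ws (Suc j))" using nb inC gt by force
  have le: "off + int (S ws (Suc j)) \<le> c'"
  proof (cases "j2 \<le> j")
    case True
    from S_mono[OF True, of ws] have "c' \<le> c" using j2 j1 eq1 by simp
    then show ?thesis using lt by simp
  next
    case False then have "Suc j \<le> j2" by simp
    from S_mono[OF this, of ws] show ?thesis using j2 by simp
  qed
  show ?thesis using j(1) j1 eq1 ge le by (intro exI[of _ j]) auto
qed

lemma cuts_good: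
  assumes z: "concat ws = z" and M: "0 < M" and len: "\<forall>y\<in>set ws. length y \<le> M"
    and pieces: "\<forall>j<length ws. lo \<le> off + int (S ws j) \<longrightarrow> off + int (S ws (Suc j)) \<le> hi \<longrightarrow> ws!j \<in> X"
    and letters: "\<forall>k. lo \<le> k \<and> k < hi \<longrightarrow> T k = z ! nat (k - off)"
    and olo: "off \<le> lo" and hio: "hi \<le> off + int (length z)"
  shows "good_cuts X M T (cuts ws off) lo hi"
  unfolding good_cuts_def
proof (intro conjI allI impI)
  fix k assume k: "lo \<le> k \<and> k + int M \<le> hi"
  have "nat (k - off) < length (concat ws)" using k M olo hio z by auto
  from locate[OF this] obtain j where j: "j < length ws" "S ws j \<le> nat (k - off)" "nat (k - off) < S ws (Suc j)" by blast
  have "length (ws!j) \<le> M" using len j(1) by auto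
  then have "S ws (Suc j) \<le> S ws j + M" using S_Suc[OF j(1)] by simp
  moreover have "off + int (S ws (Suc j)) \<in> cuts ws off" unfolding cuts_def using j(1)
    by (auto intro!: exI[of _ "Suc j"])
  ultimately show "\<exists>c\<in>cuts ws off. k < c \<and> c \<le> k + int M" using j k olo
    by (intro bexI[of _ "off + int (S ws (Suc j))"]) auto
next
  fix c c'
  assume c: "c \<in> cuts ws off" and c': "c' \<in> cuts ws off" and lo: "lo \<le> c" and lt: "c < c'" and hi: "c' \<le> hi"
    and nb: "\<forall>d\<in>cuts ws off. \<not>(c<d \<and> d<c')"
  from cuts_consec[OF c c' lt nb] obtain j where j: "j < length ws" "c = off + int (S ws j)" "c' = off + int (S ws (Suc j))"
    by blast
  have X: "ws!j \<in> X" using pieces j lo hi by auto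
  have n: "nat (c' - c) = length (ws!j)" using j S_Suc[OF j(1)] by simp
  have "slice T c (nat (c' - c)) = ws!j"
  proof (rule nth_equalityI)
    show "length (slice T c (nat (c' - c))) = length (ws!j)" using n by simp
    fix i assume "i < length (slice T c (nat (c' - c)))"
    then have i: "i < length (ws!j)" using n by simp
    have "T (c + int i) = z ! nat (c + int i - off)"
      using letters lo hi i j n by (auto)
    also have "nat (c + int i - off) = S ws j + i" using j by simp
    also have "z ! (S ws j + i) = (ws!j) ! i" using concat_nth_piece[OF j(1) i] z by simp
    finally show "slice T c (nat (c' - c)) ! i = (ws!j) ! i" using i n by simp
  qed
  then show "slice T c (nat (c' - c)) \<in> X" using X by simp
qed


lemma interp_pieces:
  assumes "has_interp X w"
  obtains ws where "ws \<noteq> []" "concat ws = w"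
    "\<forall>y\<in>set ws. \<exists>x\<in>X. length y \<le> length x \<and> set y \<subseteq> set x"
    "\<forall>j. 0 < j \<and> j < length ws - 1 \<longrightarrow> ws ! j \<in> X"
proof -
  obtain ws where ws: "ws \<noteq> []" "concat ws = w" "\<exists>x\<in>X. suffix (hd ws) x" "\<exists>x\<in>X. prefix (last ws) x"
    "\<forall>j. 0 < j \<and> j < length ws - 1 \<longrightarrow> ws ! j \<in> X"
    using assms unfolding has_interp_def by blast
  have "\<exists>x\<in>X. length y \<le> length x \<and> set y \<subseteq> set x" if y: "y \<in> set ws" for y
  proof -
    obtain j where j: "j < length ws" "y = ws ! j" using y by (auto simp: in_set_conv_nth)
    show ?thesis
    proof (cases "j = 0")
      case True
      then have "y = hd ws" using j ws(1) by (simp add: hd_conv_nth)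
      then show ?thesis using ws(3) suffix_length_le set_mono_suffix by blast
    next
      case False
      show ?thesis
      proof (cases "j = length ws - 1")
        case True
        then have "y = last ws" using j ws(1) by (simp add: last_conv_nth)
        then show ?thesis using ws(4) prefix_length_le set_mono_prefix by blast
      next
        case False2: False
        then have "y \<in> X" using ws(5) j False by auto
        then show ?thesis by blast
      qed
    qed
  qed
  then show ?thesis using that ws by blast
qed

lemma per_index:
  fixes X :: "'a list set" and w :: "'a list"
  assumes fin: "finite X" and MM: "M = Max (length ` X)" and hi: "has_interp X w"
    and ns: "\<not> sync_word X w" and ne: "w \<noteq> []"
  defines "d \<equiv> int (length w div 2) - 2 * int M"
  shows "0 < M \<and> set w \<subseteq> \<Union>(set ` X) \<and>
    (\<exists>u v C1 C2. w = u @ v \<and> 0 \<in> C1 \<and> 0 \<notin> C2 \<and> d \<le> int (length u) \<and> d \<le> int (length v) \<and>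
       good_cuts X M (\<lambda>k. (u@v) ! nat (k + int (length u))) C1 (-d) d \<and>
       good_cuts X M (\<lambda>k. (u@v) ! nat (k + int (length u))) C2 (-d) d)"
proof -
  obtain ws where ws: "ws \<noteq> []" "concat ws = w"
    "\<forall>y\<in>set ws. \<exists>x\<in>X. length y \<le> length x \<and> set y \<subseteq> set x"
    "\<forall>j. 0 < j \<and> j < length ws - 1 \<longrightarrow> ws ! j \<in> X"
    using interp_pieces[OF hi] by blast
  have Mge: "length x \<le> M" if "x \<in> X" for x
    unfolding MM using fin that by simp
  have lenM: "\<forall>y\<in>set ws. length y \<le> M" using ws(3) Mge by force
  have Mpos: "0 < M"
  proof -
    obtain y where "y \<in> set ws" "y \<noteq> []" using ws(2) ne by auto
    then have "length y \<le> M" "0 < length y" using lenM by auto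
    then show ?thesis by linarith
  qed
  have setw: "set w \<subseteq> \<Union>(set ` X)"
  proof
    fix a assume "a \<in> set w"
    then obtain y where "y \<in> set ws" "a \<in> set y" using ws(2) by auto
    then show "a \<in> \<Union>(set ` X)" using ws(3) by blast
  qed
  define n where "n = length w"
  define h where "h = n div 2"
  have hn: "h < length (concat ws)" using ne ws(2) unfolding h_def n_def by simp
  from locate[OF hn] obtain j where j: "j < length ws" "S ws j \<le> h" "h < S ws (Suc j)" by blast
  define u where "u = concat (take j ws)"
  define v where "v = concat (drop j ws)"
  have wuv: "w = u @ v" unfolding u_def v_def using ws(2)
    by (metis append_take_drop_id concat_append)
  have lu: "length u = S ws j" unfolding u_def S_def by simp
  have lv: "length v = n - S ws j" using wuv lu unfolding n_def by simp
  have Sj1: "S ws (Suc j) \<le> S ws j + M" using S_Suc[OF j(1)] lenM j(1) by simp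
  have hd: "d = int h - 2 * int M" unfolding d_def h_def n_def by simp
  have du: "d + int M + 1 \<le> int (length u)" using lu j Sj1 hd by linarith
  have dv: "d \<le> int (length v)" using lv j hd unfolding h_def by linarith
  have du': "d \<le> int (length u)" using du by linarith
  define T where "T = (\<lambda>k. (u@v) ! nat (k + int (length u)))"
  define C1 where "C1 = cuts ws (- int (length u))"
  have C1_0: "0 \<in> C1" unfolding C1_def cuts_def using lu j(1) by (auto intro!: exI[of _ j])
  have g1: "good_cuts X M T C1 (-d) d"
    unfolding C1_def
  proof (rule cuts_good[OF ws(2) Mpos lenM])
    show "\<forall>ja<length ws. - d \<le> - int (length u) + int (S ws ja) \<longrightarrow>
        - int (length u) + int (S ws (Suc ja)) \<le> d \<longrightarrow> ws ! ja \<in> X"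
    proof (intro allI impI)
      fix ja assume ja: "ja < length ws" "- d \<le> - int (length u) + int (S ws ja)"
        "- int (length u) + int (S ws (Suc ja)) \<le> d"
      have "0 < S ws ja" using ja(2) du Mpos by linarith
      then have "0 < ja" by (cases ja) auto
      moreover have "S ws (Suc ja) < n" using ja(3) lu j hd Mpos unfolding h_def by linarith
      then have "Suc ja \<noteq> length ws" using S_len[of ws] ws(2) n_def by auto
      then have "ja < length ws - 1" using ja(1) by simp
      ultimately show "ws ! ja \<in> X" using ws(4) by blast
    qed
    show "\<forall>k. - d \<le> k \<and> k < d \<longrightarrow> T k = w ! nat (k - - int (length u))"
      unfolding T_def wuv by simp
    show "- int (length u) \<le> - d" using du' by simp
    show "d \<le> - int (length u) + int (length w)" using wuv dv by simp
  qed
  obtain p s where ps: "p @ w @ s \<in> star X" "\<not> (p @ u \<in> star X \<and> v @ s \<in> star X)"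
    using ns wuv unfolding sync_word_def by blast
  obtain xs where xs: "p @ w @ s = concat xs" "set xs \<subseteq> X" using ps(1) unfolding star_def by blast
  define C2 where "C2 = cuts xs (- int (length p) - int (length u))"
  have C2_0: "0 \<notin> C2"
  proof
    assume "0 \<in> C2"
    then obtain k where k: "k \<le> length xs" "S xs k = length p + length u"
      unfolding C2_def cuts_def by auto
    have cc: "concat (take k xs) @ concat (drop k xs) = (p @ u) @ (v @ s)"
      using xs(1) wuv by (metis append_assoc append_take_drop_id concat_append)
    have L: "length (concat (take k xs)) = length (p @ u)" using k unfolding S_def by simp
    have "concat (take k xs) = p @ u \<and> concat (drop k xs) = v @ s"
      using append_eq_append_conv[of "concat (take k xs)" "p @ u" "concat (drop k xs)" "v @ s"] L cc by blast
    then have "concat (take k xs) = p @ u" "concat (drop k xs) = v @ s" by auto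
    moreover have "set (take k xs) \<subseteq> X" by (rule order_trans[OF set_take_subset xs(2)])
    moreover have "set (drop k xs) \<subseteq> X" by (rule order_trans[OF set_drop_subset xs(2)])
    ultimately have "p @ u \<in> star X" "v @ s \<in> star X" unfolding star_def by (metis (mono_tags, lifting) mem_Collect_eq)+
    then show False using ps(2) by blast
  qed
  have lenX: "\<forall>y\<in>set xs. length y \<le> M" using xs(2) Mge by blast
  have g2: "good_cuts X M T C2 (-d) d"
    unfolding C2_def
  proof (rule cuts_good[OF xs(1)[symmetric] Mpos lenX])
    show "\<forall>ja<length xs. - d \<le> - int (length p) - int (length u) + int (S xs ja) \<longrightarrow>
        - int (length p) - int (length u) + int (S xs (Suc ja)) \<le> d \<longrightarrow> xs ! ja \<in> X"
      using xs(2) by auto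
    show "\<forall>k. - d \<le> k \<and> k < d \<longrightarrow> T k = (p @ w @ s) ! nat (k - (- int (length p) - int (length u)))"
    proof (intro allI impI)
      fix k assume k: "- d \<le> k \<and> k < d"
      have e: "nat (k - (- int (length p) - int (length u))) = length p + nat (k + int (length u))"
        using k du' by linarith
      have "nat (k + int (length u)) < length w" using k du' dv wuv by (simp; linarith)
      then show "T k = (p @ w @ s) ! nat (k - (- int (length p) - int (length u)))"
        unfolding e T_def wuv[symmetric] by (simp add: nth_append)
    qed
    show "- int (length p) - int (length u) \<le> - d" using du' by simp
    show "d \<le> - int (length p) - int (length u) + int (length (p @ w @ s))" using wuv dv by simp
  qed
  show ?thesis
    using Mpos setw wuv C1_0 C2_0 du' dv g1 g2 unfolding T_def by blast
qed


lemma window_ev: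
  fixes P :: "nat \<Rightarrow> 'b \<Rightarrow> bool"
  assumes "finite K" and "\<forall>k\<in>K. \<exists>L. \<forall>i\<ge>L. P i k"
  shows "\<exists>L. \<forall>i\<ge>L. \<forall>k\<in>K. P i k"
proof -
  from assms(2) obtain Lf where Lf: "\<forall>k\<in>K. \<forall>i\<ge>Lf k. P i k" by metis
  define L where "L = Max (insert 0 (Lf ` K))"
  have "Lf k \<le> L" if "k \<in> K" for k unfolding L_def using assms(1) that by simp
  then show ?thesis using Lf by (intro exI[of _ L]) (meson order_trans)
qed

lemma slice_cong:
  assumes "\<forall>j<n. T (a + int j) = T' (a + int j)"
  shows "slice T a n = slice T' a n"
  using assms by (intro nth_equalityI) auto

lemma limit_cuts:
  fixes Ts :: "nat \<Rightarrow> int \<Rightarrow> 'a" and Cs :: "nat \<Rightarrow> int set" and dd :: "nat \<Rightarrow> int"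
  assumes conv: "\<forall>k. \<exists>L. \<forall>i\<ge>L. Ts i k = t k \<and> (k \<in> Cs i \<longleftrightarrow> k \<in> C)"
    and big: "\<forall>B. \<exists>L. \<forall>i\<ge>L. good_cuts X M (Ts i) (Cs i) (-(dd i)) (dd i) \<and> B \<le> dd i"
  shows "(\<forall>k. \<exists>c\<in>C. k < c \<and> c \<le> k + int M) \<and>
    (\<forall>c c'. c\<in>C \<longrightarrow> c'\<in>C \<longrightarrow> c < c' \<longrightarrow> (\<forall>d\<in>C. \<not>(c<d \<and> d<c')) \<longrightarrow> slice t c (nat(c'-c)) \<in> X)"
proof -
  have win: "\<exists>L. \<forall>i\<ge>L. \<forall>k\<in>{a..b}. Ts i k = t k \<and> (k \<in> Cs i \<longleftrightarrow> k \<in> C)" for a b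
    by (rule window_ev) (use conv in auto)
  have G: "\<exists>c\<in>C. k < c \<and> c \<le> k + int M" for k
  proof -
    obtain L1 where L1: "\<forall>i\<ge>L1. \<forall>k'\<in>{k..k + int M}. Ts i k' = t k' \<and> (k' \<in> Cs i \<longleftrightarrow> k' \<in> C)"
      using win by blast
    obtain L2 where L2: "\<forall>i\<ge>L2. good_cuts X M (Ts i) (Cs i) (-(dd i)) (dd i) \<and> \<bar>k\<bar> + int M + 1 \<le> dd i"
      using big by blast
    define i where "i = max L1 L2"
    have gc: "good_cuts X M (Ts i) (Cs i) (-(dd i)) (dd i)" and di: "\<bar>k\<bar> + int M + 1 \<le> dd i"
      using L2 unfolding i_def by auto
    have "- dd i \<le> k \<and> k + int M \<le> dd i" using di by linarith
    then obtain c where c: "c \<in> Cs i" "k < c" "c \<le> k + int M"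
      using gc unfolding good_cuts_def by blast
    have "c \<in> C" using L1 c unfolding i_def by auto
    then show ?thesis using c by blast
  qed
  have P: "slice t c (nat(c'-c)) \<in> X"
    if c: "c\<in>C" "c'\<in>C" "c < c'" and nb: "\<forall>d\<in>C. \<not>(c<d \<and> d<c')" for c c'
  proof -
    obtain c'' where c'': "c'' \<in> C" "c < c''" "c'' \<le> c + int M" using G by blast
    have "c' \<le> c''" using nb c'' by force
    obtain L1 where L1: "\<forall>i\<ge>L1. \<forall>k'\<in>{c..c'}. Ts i k' = t k' \<and> (k' \<in> Cs i \<longleftrightarrow> k' \<in> C)"
      using win by blast
    obtain L2 where L2: "\<forall>i\<ge>L2. good_cuts X M (Ts i) (Cs i) (-(dd i)) (dd i) \<and> \<bar>c\<bar> + \<bar>c'\<bar> + 1 \<le> dd i"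
      using big by blast
    define i where "i = max L1 L2"
    have gc: "good_cuts X M (Ts i) (Cs i) (-(dd i)) (dd i)" and di: "\<bar>c\<bar> + \<bar>c'\<bar> + 1 \<le> dd i"
      using L2 unfolding i_def by auto
    have W: "\<forall>k'\<in>{c..c'}. Ts i k' = t k' \<and> (k' \<in> Cs i \<longleftrightarrow> k' \<in> C)" using L1 unfolding i_def by auto
    have ci: "c \<in> Cs i" "c' \<in> Cs i" using W c by auto
    have nbi: "\<forall>d\<in>Cs i. \<not>(c<d \<and> d<c')"
    proof (intro ballI notI)
      fix d assume d: "d \<in> Cs i" "c < d \<and> d < c'"
      then have "d \<in> C" using W by auto
      then show False using nb d by blast
    qed
    have "- dd i \<le> c" "c' \<le> dd i" using di by linarith+
    then have "slice (Ts i) c (nat(c'-c)) \<in> X"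
      using gc ci c(3) nbi unfolding good_cuts_def by blast
    moreover have "slice (Ts i) c (nat(c'-c)) = slice t c (nat(c'-c))"
    proof (rule slice_cong, intro allI impI)
      fix j assume "j < nat (c' - c)"
      then have "c + int j \<in> {c..c'}" by auto
      then show "Ts i (c + int j) = t (c + int j)" using W by blast
    qed
    ultimately show ?thesis by simp
  qed
  show ?thesis using G P by blast
qed

lemma shifted_eq:
  "- int (length u) \<le> k \<Longrightarrow> k < int (length v) \<Longrightarrow>
   shifted u v k = Some ((u @ v) ! nat (k + int (length u)))"
proof (cases "k < 0")
  case True
  assume a: "- int (length u) \<le> k" "k < int (length v)"
  have "nat (k + int (length u)) < length u" using True a by linarith
  then show ?thesis using True a unfolding shifted_def by (simp add: nth_append add.commute)
next
  case False
  assume a: "- int (length u) \<le> k" "k < int (length v)"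
  have "nat (k + int (length u)) = length u + nat k" using False by linarith
  then show ?thesis using False a unfolding shifted_def by simp
qed

lemma shifted_range: "shifted u v k \<in> insert None (Some ` set (u @ v))"
  unfolding shifted_def by auto

theorem lemma28:
  fixes X :: "'a list set" and w :: "nat \<Rightarrow> 'a list"
  assumes "finite X"
    and "filterlim (\<lambda>i. length (w i)) at_top sequentially"
    and "\<forall>i. has_interp X (w i)"
    and "\<forall>i. \<not> sync_word X (w i)"
  shows "\<exists>u v. (\<forall>i. w i = u i @ v i) \<and>
           (\<exists>\<phi> t. strict_mono \<phi> \<and>
              converges_to (\<lambda>i. shifted (u (\<phi> i)) (v (\<phi> i))) t \<and> two_Xfacts X t)"
proof -
  define M where "M = Max (length ` X)"
  define A where "A = \<Union>(set ` X)"
  define dd where "dd i = int (length (w i) div 2) - 2 * int M" for i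
  define Q where "Q = (\<lambda>i (z :: 'a list \<times> 'a list \<times> int set \<times> int set).
     w i = fst z @ fst (snd z) \<and> set (w i) \<subseteq> A \<and>
     (w i \<noteq> [] \<longrightarrow> 0 \<in> fst (snd (snd z)) \<and> 0 \<notin> snd (snd (snd z)) \<and>
        dd i \<le> int (length (fst z)) \<and> dd i \<le> int (length (fst (snd z))) \<and>
        good_cuts X M (\<lambda>k. (fst z @ fst (snd z)) ! nat (k + int (length (fst z)))) (fst (snd (snd z))) (- dd i) (dd i) \<and>
        good_cuts X M (\<lambda>k. (fst z @ fst (snd z)) ! nat (k + int (length (fst z)))) (snd (snd (snd z))) (- dd i) (dd i)))"
  have "\<exists>z. Q i z" for i
  proof (cases "w i = []")
    case True
    then show ?thesis unfolding Q_def by (intro exI[of _ "([], [], {}, {})"]) simp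
  next
    case False
    from per_index[OF assms(1) M_def assms(3)[rule_format] assms(4)[rule_format] False]
    obtain u v C1 C2 where H: "set (w i) \<subseteq> A" "w i = u @ v" "0 \<in> C1" "0 \<notin> C2" "dd i \<le> int (length u)"
      "dd i \<le> int (length v)"
      "good_cuts X M (\<lambda>k. (u@v) ! nat (k + int (length u))) C1 (- dd i) (dd i)"
      "good_cuts X M (\<lambda>k. (u@v) ! nat (k + int (length u))) C2 (- dd i) (dd i)"
      unfolding A_def dd_def by blast
    have "set u \<subseteq> A" "set v \<subseteq> A" using H(1) H(2) by auto
    then show ?thesis unfolding Q_def by (intro exI[of _ "(u, v, C1, C2)"]) (simp add: H)
  qed
  then obtain f where f: "\<forall>i. Q i (f i)" by metis
  define U where "U i = fst (f i)" for i
  define V where "V i = fst (snd (f i))" for i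
  define C1 where "C1 i = fst (snd (snd (f i)))" for i
  define C2 where "C2 i = snd (snd (snd (f i)))" for i
  define Ts where "Ts i k = (U i @ V i) ! nat (k + int (length (U i)))" for i k
  have fi: "Q i (f i)" for i using f by blast
  have wUV: "w i = U i @ V i" for i using fi[of i] unfolding Q_def U_def V_def by blast
  have setA: "set (w i) \<subseteq> A" for i using fi[of i] unfolding Q_def by blast
  have props: "0 \<in> C1 i \<and> 0 \<notin> C2 i \<and> dd i \<le> int (length (U i)) \<and> dd i \<le> int (length (V i)) \<and>
      good_cuts X M (Ts i) (C1 i) (- dd i) (dd i) \<and> good_cuts X M (Ts i) (C2 i) (- dd i) (dd i)"
    if "w i \<noteq> []" for i
    using fi[of i] that unfolding Q_def U_def V_def C1_def C2_def Ts_def[abs_def] by blast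
  have finA: "finite A" unfolding A_def using assms(1) by auto
  define g where "g i k = (shifted (U i) (V i) k, k \<in> C1 i, k \<in> C2 i)" for i k
  have fin: "finite (range (\<lambda>i. g i k))" for k
  proof (rule finite_subset)
    show "range (\<lambda>i. g i k) \<subseteq> insert None (Some ` A) \<times> (UNIV :: bool set) \<times> (UNIV :: bool set)"
    proof
      fix y assume "y \<in> range (\<lambda>i. g i k)"
      then obtain i where y: "y = g i k" by blast
      have "shifted (U i) (V i) k \<in> insert None (Some ` A)"
        using shifted_range[of "U i" "V i" k] setA[of i] wUV[of i] by auto
      then show "y \<in> insert None (Some ` A) \<times> (UNIV :: bool set) \<times> (UNIV :: bool set)"
        unfolding y g_def by simp
    qed
    show "finite (insert None (Some ` A) \<times> (UNIV :: bool set) \<times> (UNIV :: bool set))"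
      using finA by simp
  qed
  obtain \<phi> :: "nat \<Rightarrow> nat" and h where phi: "strict_mono \<phi>" and hconv: "\<forall>k. \<exists>L. \<forall>i\<ge>L. g (\<phi> i) k = h k"
    using compact_seq[of g] fin by blast
  have lim: "filterlim (\<lambda>i. length (w (\<phi> i))) at_top sequentially"
    using filterlim_compose[OF assms(2) filterlim_subseq[OF phi]] by (simp add: o_def)
  have bigd: "\<exists>L. \<forall>i\<ge>L. w (\<phi> i) \<noteq> [] \<and> B \<le> dd (\<phi> i)" for B
  proof -
    define Z where "Z = 2 * nat (\<bar>B\<bar> + 2 * int M) + 2"
    have "eventually (\<lambda>i. Z \<le> length (w (\<phi> i))) sequentially"
      using lim unfolding filterlim_at_top by blast
    then obtain L where L: "\<forall>i\<ge>L. Z \<le> length (w (\<phi> i))" unfolding eventually_sequentially by blast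
    have "w (\<phi> i) \<noteq> [] \<and> B \<le> dd (\<phi> i)" if "i \<ge> L" for i
    proof -
      have z: "Z \<le> length (w (\<phi> i))" using L that by blast
      then have "w (\<phi> i) \<noteq> []" unfolding Z_def by auto
      moreover have "nat (\<bar>B\<bar> + 2 * int M) + 1 \<le> length (w (\<phi> i)) div 2" using z unfolding Z_def by linarith
      then have "B \<le> dd (\<phi> i)" unfolding dd_def by linarith
      ultimately show ?thesis by blast
    qed
    then show ?thesis by blast
  qed
  define t where "t k = the (fst (h k))" for k
  define CI where "CI = {k. fst (snd (h k))}"
  define CF where "CF = {k. snd (snd (h k))}"
  have key: "\<exists>L. \<forall>i\<ge>L. shifted (U (\<phi> i)) (V (\<phi> i)) k = Some (t k) \<and> Ts (\<phi> i) k = t k \<and>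
      (k \<in> C1 (\<phi> i) \<longleftrightarrow> k \<in> CI) \<and> (k \<in> C2 (\<phi> i) \<longleftrightarrow> k \<in> CF)" for k
  proof -
    obtain L1 where L1: "\<forall>i\<ge>L1. g (\<phi> i) k = h k" using hconv by blast
    obtain L2 where L2: "\<forall>i\<ge>L2. w (\<phi> i) \<noteq> [] \<and> \<bar>k\<bar> + 1 \<le> dd (\<phi> i)" using bigd by blast
    have "shifted (U (\<phi> i)) (V (\<phi> i)) k = Some (t k) \<and> Ts (\<phi> i) k = t k \<and>
      (k \<in> C1 (\<phi> i) \<longleftrightarrow> k \<in> CI) \<and> (k \<in> C2 (\<phi> i) \<longleftrightarrow> k \<in> CF)" if i: "i \<ge> max L1 L2" for i
    proof -
      have ne: "w (\<phi> i) \<noteq> []" and dk: "\<bar>k\<bar> + 1 \<le> dd (\<phi> i)" using L2 i by auto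
      have gh: "g (\<phi> i) k = h k" using L1 i by auto
      have pr: "dd (\<phi> i) \<le> int (length (U (\<phi> i)))" "dd (\<phi> i) \<le> int (length (V (\<phi> i)))"
        using props[OF ne] by auto
      have sh: "shifted (U (\<phi> i)) (V (\<phi> i)) k = Some (Ts (\<phi> i) k)"
        unfolding Ts_def by (rule shifted_eq) (use pr dk in linarith)+
      have "fst (h k) = Some (Ts (\<phi> i) k)" using gh sh unfolding g_def by (metis fst_conv)
      then have tk: "t k = Ts (\<phi> i) k" unfolding t_def by simp
      show ?thesis using sh tk gh[symmetric] unfolding g_def CI_def CF_def by auto
    qed
    then show ?thesis by blast
  qed
  have conv: "converges_to (\<lambda>i. shifted (U (\<phi> i)) (V (\<phi> i))) t"
    unfolding converges_to_def using key by blast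
  have big1: "\<exists>L. \<forall>i\<ge>L. good_cuts X M (Ts (\<phi> i)) (C1 (\<phi> i)) (-(dd (\<phi> i))) (dd (\<phi> i)) \<and> B \<le> dd (\<phi> i)" for B
    using bigd[of B] props by blast
  have big2: "\<exists>L. \<forall>i\<ge>L. good_cuts X M (Ts (\<phi> i)) (C2 (\<phi> i)) (-(dd (\<phi> i))) (dd (\<phi> i)) \<and> B \<le> dd (\<phi> i)" for B
    using bigd[of B] props by blast
  have conv1: "\<forall>k. \<exists>L. \<forall>i\<ge>L. Ts (\<phi> i) k = t k \<and> (k \<in> C1 (\<phi> i) \<longleftrightarrow> k \<in> CI)"
    using key by blast
  have conv2: "\<forall>k. \<exists>L. \<forall>i\<ge>L. Ts (\<phi> i) k = t k \<and> (k \<in> C2 (\<phi> i) \<longleftrightarrow> k \<in> CF)"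
    using key by blast
  note lc1 = limit_cuts[OF conv1 allI[OF big1]]
  note lc2 = limit_cuts[OF conv2 allI[OF big2]]
  have zero: "0 \<in> CI \<and> 0 \<notin> CF"
  proof -
    obtain L1 where L1: "\<forall>i\<ge>L1. (0 \<in> C1 (\<phi> i) \<longleftrightarrow> 0 \<in> CI) \<and> (0 \<in> C2 (\<phi> i) \<longleftrightarrow> 0 \<in> CF)"
      using key[of 0] by blast
    obtain L2 where L2: "\<forall>i\<ge>L2. w (\<phi> i) \<noteq> [] \<and> 0 \<le> dd (\<phi> i)" using bigd by blast
    have "w (\<phi> (max L1 L2)) \<noteq> []" using L2 by auto
    then have "0 \<in> C1 (\<phi> (max L1 L2))" "0 \<notin> C2 (\<phi> (max L1 L2))" using props by auto
    then show ?thesis using L1 by auto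
  qed
  obtain x p q where F1: "is_Xfact X t x p q" "p = [] \<longleftrightarrow> 0 \<in> CI"
    using build_fact[of CI M t X] lc1 by blast
  obtain x' p' q' where F2: "is_Xfact X t x' p' q'" "p' = [] \<longleftrightarrow> 0 \<in> CF"
    using build_fact[of CF M t X] lc2 by blast
  have "(p, q) \<noteq> (p', q')" using F1(2) F2(2) zero by auto
  then have "two_Xfacts X t" unfolding two_Xfacts_def using F1(1) F2(1) by blast
  then show ?thesis using wUV phi conv by blast
qed
end
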